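(* Let $E$ be a finite set, $\mathcal{F}\subseteq 2^E$ a downward-closed family, and $f:\mathbb{R}_{\ge0}^{|E|}\to\mathbb{R}$, $f(\boldsymbol{w})=\max_{S\in\mathcal{F}}\sum_{e\in S}w_e$. Then: (1) $f$ is $1$-Lipschitz: $|f(\boldsymbol{u})-f(\boldsymbol{v})|\le\|\boldsymbol{u}-\boldsymbol{v}\|_1$ for all $\boldsymbol{u},\boldsymbol{v}\in\mathbb{R}_{\ge0}^{|E|}$; (2) $f$ is monotone: if $\boldsymbol{u}\ge\boldsymbol{v}$ coordinate-wise then $f(\boldsymbol{u})\ge f(\boldsymbol{v})$; (3) for every $\tau>0$, the function $f/\tau$ restricted to the domain $[0,\tau]^{|E|}$ is self-bounding.
   Context: A function $g:\mathcal{X}\to\mathbb{R}$ on a product space $\mathcal{X}=\mathcal{X}_1\times\dots\times\mathcal{X}_n$ is self-bounding if there exist functions $g_i:\mathcal{X}^{(i)}\to\mathbb{R}$, $i\in[n]$, where $\mathcal{X}^{(i)}$ is the product of all factors except the $i$-th and $\boldsymbol{x}^{(i)}=(x_1,\dots,x_{i-1},x_{i+1},\dots,x_n)$, such that for all $\boldsymbol{x}\in\mathcal{X}$: $0\le g(\boldsymbol{x})-g_i(\boldsymbol{x}^{(i)})\le1$ for every $i$, and $\sum_{i\in[n]}\big(g(\boldsymbol{x})-g_i(\boldsymbol{x}^{(i)})\big)\le g(\boldsymbol{x})$. A family $\mathcal{F}$ is downward-closed if $S\in\mathcal{F}$ and $T\subseteq S$ imply $T\in\mathcal{F}$. *)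

theory Defs
  imports Complex_Main "HOL-Library.FuncSet"
begin

definition maxweight :: "'a set set \<Rightarrow> ('a \<Rightarrow> real) \<Rightarrow> real" where
  "maxweight F w = Max ((\<lambda>S. \<Sum>e\<in>S. w e) ` F)"

definition downward_closed :: "'a set set \<Rightarrow> bool" where
  "downward_closed F \<longleftrightarrow> (\<forall>S T. S \<in> F \<longrightarrow> T \<subseteq> S \<longrightarrow> T \<in> F)"

text \<open>The point with the i-th coordinate removed is
  restrict x (I - {i}), an element of PiE (I - {i}) X.\<close>
definition self_bounding :: "'i set \<Rightarrow> ('i \<Rightarrow> 'b set) \<Rightarrow> (('i \<Rightarrow> 'b) \<Rightarrow> real) \<Rightarrow> bool" where
  "self_bounding I X g \<longleftrightarrow>
     (\<exists>gi :: 'i \<Rightarrow> ('i \<Rightarrow> 'b) \<Rightarrow> real.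
        \<forall>x \<in> PiE I X.
          (\<forall>i\<in>I. 0 \<le> g x - gi i (restrict x (I - {i})) \<and> g x - gi i (restrict x (I - {i})) \<le> 1)
          \<and> (\<Sum>i\<in>I. g x - gi i (restrict x (I - {i}))) \<le> g x)"

end

theory Submission
  imports Defs
begin

lemma mw_ge:
  assumes "finite F" "S \<in> F"
  shows "(\<Sum>e\<in>S. w e) \<le> maxweight F w"
  unfolding maxweight_def using assms by (intro Max_ge) auto

lemma mw_obtain:
  assumes "finite F" "F \<noteq> {}"
  obtains S where "S \<in> F" "maxweight F w = (\<Sum>e\<in>S. w e)"
proof -
  have "maxweight F w \<in> (\<lambda>S. \<Sum>e\<in>S. w e) ` F"
    unfolding maxweight_def using assms by (intro Max_in) auto
  then show ?thesis using that by auto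
qed

lemma mw_lip_half:
  assumes "finite E" "F \<subseteq> Pow E" "F \<noteq> {}"
  shows "maxweight F u \<le> maxweight F v + (\<Sum>e\<in>E. \<bar>u e - v e\<bar>)"
proof -
  have fF: "finite F" using assms by (meson finite_Pow_iff finite_subset)
  obtain S where S: "S \<in> F" "maxweight F u = (\<Sum>e\<in>S. u e)" using mw_obtain[OF fF assms(3)] by blast
  have SE: "S \<subseteq> E" using S assms by auto
  have "(\<Sum>e\<in>S. u e) = (\<Sum>e\<in>S. v e) + (\<Sum>e\<in>S. u e - v e)" by (simp add: sum_subtractf)
  also have "(\<Sum>e\<in>S. u e - v e) \<le> (\<Sum>e\<in>S. \<bar>u e - v e\<bar>)" by (intro sum_mono) auto
  also have "(\<Sum>e\<in>S. \<bar>u e - v e\<bar>) \<le> (\<Sum>e\<in>E. \<bar>u e - v e\<bar>)"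
    using SE assms(1) by (intro sum_mono2) auto
  also have "(\<Sum>e\<in>S. v e) \<le> maxweight F v" using mw_ge[OF fF S(1)] .
  finally show ?thesis using S by linarith
qed

lemma mw_cong:
  assumes "finite E" "F \<subseteq> Pow E" "F \<noteq> {}" "\<forall>e\<in>E. u e = w e"
  shows "maxweight F u = maxweight F w"
  using mw_lip_half[OF assms(1-3), of u w] mw_lip_half[OF assms(1-3), of w u] assms(4) by simp

lemma mw_mono:
  assumes "finite E" "F \<subseteq> Pow E" "F \<noteq> {}" "\<forall>e\<in>E. v e \<le> u e"
  shows "maxweight F v \<le> maxweight F u"
proof -
  have fF: "finite F" using assms by (meson finite_Pow_iff finite_subset)
  obtain S where S: "S \<in> F" "maxweight F v = (\<Sum>e\<in>S. v e)" using mw_obtain[OF fF assms(3)] by blast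
  have SE: "S \<subseteq> E" using S assms by auto
  have "(\<Sum>e\<in>S. v e) \<le> (\<Sum>e\<in>S. u e)" using SE assms(4) by (intro sum_mono) auto
  also have "\<dots> \<le> maxweight F u" using mw_ge[OF fF S(1)] .
  finally show ?thesis using S by simp
qed

theorem proposition1:
  fixes E :: "'a set" and F :: "'a set set"
  assumes "finite E" and "F \<subseteq> Pow E" and "F \<noteq> {}" and "downward_closed F"
  shows "(\<forall>u v. (\<forall>e\<in>E. u e \<ge> 0) \<longrightarrow> (\<forall>e\<in>E. v e \<ge> 0) \<longrightarrow>
            \<bar>maxweight F u - maxweight F v\<bar> \<le> (\<Sum>e\<in>E. \<bar>u e - v e\<bar>))
       \<and> (\<forall>u v. (\<forall>e\<in>E. v e \<ge> 0) \<longrightarrow> (\<forall>e\<in>E. v e \<le> u e) \<longrightarrow>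
            maxweight F v \<le> maxweight F u)
       \<and> (\<forall>\<tau>::real. \<tau> > 0 \<longrightarrow>
            self_bounding E (\<lambda>_. {0..\<tau>}) (\<lambda>w. maxweight F w / \<tau>))"
proof (intro conjI allI impI)
  fix u v :: "'a \<Rightarrow> real"
  show "\<bar>maxweight F u - maxweight F v\<bar> \<le> (\<Sum>e\<in>E. \<bar>u e - v e\<bar>)"
    using mw_lip_half[OF assms(1-3), of u v] mw_lip_half[OF assms(1-3), of v u]
    by (simp add: abs_minus_commute)
next
  fix u v :: "'a \<Rightarrow> real"
  assume "\<forall>e\<in>E. v e \<le> u e"
  then show "maxweight F v \<le> maxweight F u" using mw_mono[OF assms(1-3)] by blast
next
  fix \<tau> :: real assume tau: "\<tau> > 0"
  have fF: "finite F" using assms by (meson finite_Pow_iff finite_subset)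
  define gi where "gi = (\<lambda>i (y::'a \<Rightarrow> real). maxweight F (y(i:=0)) / \<tau>)"
  show "self_bounding E (\<lambda>_. {0..\<tau>}) (\<lambda>w. maxweight F w / \<tau>)"
    unfolding self_bounding_def
  proof (intro exI[of _ gi] ballI conjI)
    fix x assume x: "x \<in> PiE E (\<lambda>_. {0..\<tau>})"
    have xr: "\<And>e. e \<in> E \<Longrightarrow> 0 \<le> x e \<and> x e \<le> \<tau>" using x by (auto simp: PiE_def Pi_def)
    have gi_eq: "gi i (restrict x (E - {i})) = maxweight F (x(i:=0)) / \<tau>" if "i \<in> E" for i
      unfolding gi_def using mw_cong[OF assms(1-3), of "(restrict x (E - {i}))(i:=0)" "x(i:=0)"]
      by auto
    have diff: "maxweight F x - maxweight F (x(i:=0)) \<le> x i"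
      "0 \<le> maxweight F x - maxweight F (x(i:=0))" if i: "i \<in> E" for i
    proof -
      have "(\<Sum>e\<in>E. \<bar>x e - (x(i:=0)) e\<bar>) = (\<Sum>e\<in>E. if e = i then \<bar>x i\<bar> else 0)"
        by (intro sum.cong) auto
      also have "\<dots> = \<bar>x i\<bar>" using assms(1) i by simp
      also have "\<dots> = x i" using xr[OF i] by simp
      finally show "maxweight F x - maxweight F (x(i:=0)) \<le> x i"
        using mw_lip_half[OF assms(1-3), of x "x(i:=0)"] by linarith
      show "0 \<le> maxweight F x - maxweight F (x(i:=0))"
        using mw_mono[OF assms(1-3), of "x(i:=0)" x] xr by auto
    qed
    obtain S where S: "S \<in> F" "maxweight F x = (\<Sum>e\<in>S. x e)" using mw_obtain[OF fF assms(3)] by blast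
    have SE: "S \<subseteq> E" using S assms by auto
    have fS: "finite S" using SE assms(1) finite_subset by blast
    have bnd: "maxweight F x - maxweight F (x(i:=0)) \<le> (if i \<in> S then x i else 0)" if i: "i \<in> E" for i
    proof (cases "i \<in> S")
      case True
      have "S - {i} \<in> F" using assms(4) S(1) unfolding downward_closed_def by blast
      then have "(\<Sum>e\<in>S - {i}. (x(i:=0)) e) \<le> maxweight F (x(i:=0))" using mw_ge[OF fF] by blast
      moreover have "(\<Sum>e\<in>S - {i}. (x(i:=0)) e) = (\<Sum>e\<in>S - {i}. x e)" by (intro sum.cong) auto
      moreover have "(\<Sum>e\<in>S. x e) = x i + (\<Sum>e\<in>S - {i}. x e)" using True fS by (simp add: sum.remove)
      ultimately show ?thesis using True S by simp
    next
      case False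
      have "(\<Sum>e\<in>S. (x(i:=0)) e) \<le> maxweight F (x(i:=0))" using mw_ge[OF fF S(1)] .
      moreover have "(\<Sum>e\<in>S. (x(i:=0)) e) = (\<Sum>e\<in>S. x e)" using False by (intro sum.cong) auto
      ultimately show ?thesis using False S by simp
    qed
    fix i assume i: "i \<in> E"
    show "0 \<le> maxweight F x / \<tau> - gi i (restrict x (E - {i}))"
      using gi_eq[OF i] diff(2)[OF i] tau by (simp add: diff_divide_distrib[symmetric])
    show "maxweight F x / \<tau> - gi i (restrict x (E - {i})) \<le> 1"
      using gi_eq[OF i] diff(1)[OF i] xr[OF i] tau
      by (simp add: diff_divide_distrib[symmetric] divide_le_eq)
  next
    fix x assume x: "x \<in> PiE E (\<lambda>_. {0..\<tau>})"
    have xr: "\<And>e. e \<in> E \<Longrightarrow> 0 \<le> x e \<and> x e \<le> \<tau>" using x by (auto simp: PiE_def Pi_def)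
    have gi_eq: "gi i (restrict x (E - {i})) = maxweight F (x(i:=0)) / \<tau>" if "i \<in> E" for i
      unfolding gi_def using mw_cong[OF assms(1-3), of "(restrict x (E - {i}))(i:=0)" "x(i:=0)"]
      by auto
    obtain S where S: "S \<in> F" "maxweight F x = (\<Sum>e\<in>S. x e)" using mw_obtain[OF fF assms(3)] by blast
    have SE: "S \<subseteq> E" using S assms by auto
    have fS: "finite S" using SE assms(1) finite_subset by blast
    have bnd: "maxweight F x - maxweight F (x(i:=0)) \<le> (if i \<in> S then x i else 0)" if i: "i \<in> E" for i
    proof (cases "i \<in> S")
      case True
      have "S - {i} \<in> F" using assms(4) S(1) unfolding downward_closed_def by blast
      then have "(\<Sum>e\<in>S - {i}. (x(i:=0)) e) \<le> maxweight F (x(i:=0))" using mw_ge[OF fF] by blast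
      moreover have "(\<Sum>e\<in>S - {i}. (x(i:=0)) e) = (\<Sum>e\<in>S - {i}. x e)" by (intro sum.cong) auto
      moreover have "(\<Sum>e\<in>S. x e) = x i + (\<Sum>e\<in>S - {i}. x e)" using True fS by (simp add: sum.remove)
      ultimately show ?thesis using True S by simp
    next
      case False
      have "(\<Sum>e\<in>S. (x(i:=0)) e) \<le> maxweight F (x(i:=0))" using mw_ge[OF fF S(1)] .
      moreover have "(\<Sum>e\<in>S. (x(i:=0)) e) = (\<Sum>e\<in>S. x e)" using False by (intro sum.cong) auto
      ultimately show ?thesis using False S by simp
    qed
    have "(\<Sum>i\<in>E. maxweight F x / \<tau> - gi i (restrict x (E - {i})))
        = (\<Sum>i\<in>E. maxweight F x - maxweight F (x(i:=0))) / \<tau>"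
      using gi_eq by (simp add: sum_divide_distrib diff_divide_distrib)
    also have "(\<Sum>i\<in>E. maxweight F x - maxweight F (x(i:=0))) \<le> (\<Sum>i\<in>E. if i \<in> S then x i else 0)"
      using bnd by (intro sum_mono) auto
    also have "(\<Sum>i\<in>E. if i \<in> S then x i else 0) = (\<Sum>i\<in>S. x i)"
      using SE assms(1) by (simp add: sum.If_cases Int_absorb1)
    finally show "(\<Sum>i\<in>E. maxweight F x / \<tau> - gi i (restrict x (E - {i}))) \<le> maxweight F x / \<tau>"
      using S tau by (simp add: divide_right_mono restrict_def)
  qed
qed

end
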